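(* Let $\theta(q,x):=\sum_{j=0}^{\infty}q^{j(j+1)/2}x^j$. For every $q\in(0,1)$, the function $x\mapsto\theta(q,x)$ has no purely imaginary zeros of modulus $\leq 2.2$; in particular it has no purely imaginary zeros of modulus $\leq 3/\sqrt{2}$. *)

theory Defs
  imports "HOL-Analysis.Analysis"
begin

definition theta :: "real \<Rightarrow> complex \<Rightarrow> complex" where
  "theta q x = (\<Sum>j. complex_of_real (q ^ (j * (j + 1) div 2)) * x ^ j)"

end

theory Submission
  imports Defs
begin

definition tri :: "nat \<Rightarrow> nat" where "tri j = j * (j+1) div 2"

lemma tri_0 [simp]: "tri 0 = 0" by (simp add: tri_def)

lemma tri_Suc: "tri (Suc j) = tri j + Suc j"
proof -
  have "Suc j * (Suc j + 1) = j * (j+1) + 2 * Suc j" by (simp add: algebra_simps)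
  then show ?thesis unfolding tri_def by simp
qed

lemma summable_tri:
  fixes r c :: real
  assumes r: "0 \<le> r" "r < 1"
  shows "summable (\<lambda>j. r^(tri j) * c^j)"
proof -
  have lim: "(\<lambda>n. r^n * \<bar>c\<bar>) \<longlonglongrightarrow> 0 * \<bar>c\<bar>"
    by (intro tendsto_mult LIMSEQ_power_zero tendsto_const) (use r in auto)
  obtain N where N: "\<And>n. n \<ge> N \<Longrightarrow> \<bar>r^n * \<bar>c\<bar>\<bar> < 1/2"
    using LIMSEQ_D[OF lim, of "1/2"] by auto
  show ?thesis
  proof (rule summable_ratio_test[where c="1/2" and N=N])
    fix n assume n: "N \<le> n"
    have "norm (r^(tri (Suc n)) * c^(Suc n)) = (r^(Suc n) * \<bar>c\<bar>) * norm (r^(tri n) * c^n)"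
      using r by (simp add: tri_Suc power_add abs_mult power_abs algebra_simps)
    also have "\<dots> \<le> 1/2 * norm (r^(tri n) * c^n)"
      apply (rule mult_right_mono)
      using N[of "Suc n"] n by auto
    finally show "norm (r^(tri (Suc n)) * c^(Suc n)) \<le> 1/2 * norm (r^(tri n) * c^n)" .
  qed simp
qed

definition F :: "real \<Rightarrow> real \<Rightarrow> real" where
  "F r x = (\<Sum>j. r^(tri j) * x^j)"

lemma F_eq:
  assumes r: "0 \<le> r" "r < 1"
  shows "F r x = 1 + r * x * F r (r * x)"
proof -
  have s: "summable (\<lambda>j. r^(tri j) * x^j)" using summable_tri[OF r] .
  have s2: "summable (\<lambda>j. r^(tri j) * (r*x)^j)" using summable_tri[OF r] .
  have "F r x = (\<Sum>j. r^(tri (Suc j)) * x^(Suc j)) + 1"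
    unfolding F_def using suminf_split_head[OF s] by simp
  also have "(\<lambda>j. r^(tri (Suc j)) * x^(Suc j)) = (\<lambda>j. (r*x) * (r^(tri j) * (r*x)^j))"
    by (auto simp: tri_Suc power_add power_mult_distrib algebra_simps)
  also have "(\<Sum>j. (r*x) * (r^(tri j) * (r*x)^j)) = (r*x) * F r (r*x)"
    unfolding F_def using suminf_mult[OF s2] by simp
  finally show ?thesis by simp
qed

lemma F_zero [simp]: "F r 0 = 1"
proof -
  have "F r 0 = (\<Sum>j. r^(tri j) * 0^j)" by (simp add: F_def)
  also have "\<dots> = 1" by (subst powser_zero) simp
  finally show ?thesis .
qed

lemma F_neg_lower:
  fixes r z :: real
  assumes r: "0 < r" "r < 1" and z: "0 \<le> z" and rz: "r^3 * z \<le> 1"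
  shows "1 - r*z + r^3*z^2 - r^6*z^3 \<le> F r (-z)"
proof -
  define a where "a j = r^(tri j) * z^j" for j
  have sa: "summable a" unfolding a_def using summable_tri[of r z] r by simp
  have eq: "F r (-z) = (\<Sum>j. (-1)^j * a j)"
    unfolding F_def a_def by (simp add: power_minus' algebra_simps)
  have sa': "summable (\<lambda>j. (-1)^j * a j)"
    using summable_tri[of r "-z"] r unfolding a_def by (simp add: power_minus' algebra_simps)
  define b where "b i = a (i + 2)" for i
  have a0: "a j \<ge> 0" for j unfolding a_def using r z by simp
  have amono: "a (Suc j) \<le> a j" if "j \<ge> 2" for j
  proof -
    have "a (Suc j) = (r^(Suc j) * z) * a j" unfolding a_def
      by (simp add: tri_Suc power_add algebra_simps)
    also have "r^(Suc j) * z \<le> r^3 * z"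
      using that r z by (intro mult_right_mono power_decreasing) auto
    then have "(r^(Suc j) * z) * a j \<le> 1 * a j" using rz a0[of j]
      by (intro mult_right_mono) auto
    finally show ?thesis by simp
  qed
  have b0: "b \<longlonglongrightarrow> 0"
    unfolding b_def using LIMSEQ_ignore_initial_segment[OF summable_LIMSEQ_zero[OF sa], of 2] by simp
  have L: "(\<Sum>i<2*1. (-1)^i * b i) \<le> (\<Sum>i. (-1)^i * b i)"
    by (rule summable_Leibniz'(2)[OF b0]) (auto simp: b_def a0 amono)
  have "(\<Sum>j. (-1)^j * a j) = (\<Sum>i. (-1)^(i+2) * a (i+2)) + (\<Sum>i<2. (-1)^i * a i)"
    by (rule suminf_split_initial_segment[OF sa'])
  also have "(\<lambda>i. (-1::real)^(i+2) * a (i+2)) = (\<lambda>i. (-1)^i * b i)"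
    by (auto simp: b_def)
  finally have Feq: "F r (-z) = (\<Sum>i. (-1)^i * b i) + (a 0 - a 1)"
    using eq by (simp add: numeral_2_eq_2)
  have t23: "tri (Suc 0) = 1" "tri (Suc (Suc 0)) = 3" "tri (Suc (Suc (Suc 0))) = 6" by (simp_all add: tri_def)
  moreover have "a 0 = 1" "a 1 = r * z" "b 0 = r^3*z^2" "b 1 = r^6 * z^3"
    by (simp_all add: a_def b_def t23 eval_nat_numeral algebra_simps)
  ultimately show ?thesis using L Feq by (simp add: numeral_2_eq_2)
qed

definition Ep :: "real \<Rightarrow> nat \<Rightarrow> real" where
  "Ep r n = (\<Prod>k=1..n. 1 - r^k)"

lemma Ep_0 [simp]: "Ep r 0 = 1" by (simp add: Ep_def)
lemma Ep_Suc: "Ep r (Suc n) = Ep r n * (1 - r^(Suc n))"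
  by (simp add: Ep_def prod.nat_ivl_Suc')

lemma Ep_pos: assumes "0 < r" "r < 1" shows "0 < Ep r n"
proof (induction n)
  case (Suc n)
  have "r^(Suc n) < 1" using assms by (intro power_Suc_less_one) auto
  then show ?case using Suc by (simp add: Ep_Suc)
qed simp

definition qb :: "real \<Rightarrow> nat \<Rightarrow> nat \<Rightarrow> real" where
  "qb r m i = (if i \<le> m then Ep r m / (Ep r i * Ep r (m - i)) else 0)"

lemma qb_0 [simp]: assumes "0 < r" "r < 1" shows "qb r m 0 = 1"
  using Ep_pos[OF assms, of m] by (simp add: qb_def)

lemma pascal_aux:
  fixes A B P Q M :: real
  assumes "P \<noteq> 0" "Q \<noteq> 0" "A \<noteq> 1" "B \<noteq> 1"
  shows "M * (1 - A * B) / (P * (1 - A) * (Q * (1 - B))) = M / (P * (1 - A) * Q) + B * (M / (P * (Q * (1 - B))))"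
proof -
  have a: "1 - A \<noteq> 0" "1 - B \<noteq> 0" using assms by auto
  have "M / (P * (1 - A) * Q) + B * (M / (P * (Q * (1 - B)))) = (M * (1 - B) + B * M * (1 - A)) / (P * (1 - A) * (Q * (1 - B)))"
    using assms(1,2) a by (simp add: add_divide_distrib mult.assoc mult.left_commute)
  also have "M * (1 - B) + B * M * (1 - A) = M * (1 - A * B)" by (simp add: algebra_simps)
  finally show ?thesis by simp
qed

lemma qb_pascal:
  assumes r: "0 < r" "r < 1" and i: "i \<le> m"
  shows "qb r (Suc m) (Suc i) = qb r m (Suc i) + r^(m - i) * qb r m i"
proof (cases "i = m")
  case True
  then show ?thesis using Ep_pos[OF r, of m] Ep_pos[OF r, of "Suc m"] by (simp add: qb_def)
next
  case False
  then have "i < m" using i by simp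
  then obtain d where "m = Suc (i + d)" using less_iff_Suc_add by auto
  then have m: "m = i + 1 + d" by simp
  have pi: "0 < Ep r i" "0 < Ep r d" "0 < Ep r m" using Ep_pos[OF r] by auto
  have A: "r^(Suc i) < 1" "r^(Suc d) < 1" using power_Suc_less_one[OF r] by blast+
  have e1: "Ep r (Suc m) = Ep r m * (1 - r^(Suc i) * r^(Suc d))"
    by (simp add: Ep_Suc m power_add[symmetric])
  have e2: "Ep r (Suc i) = Ep r i * (1 - r^(Suc i))" by (simp add: Ep_Suc)
  have e3: "Ep r (m - i) = Ep r d * (1 - r^(Suc d))" by (simp add: m Ep_Suc)
  have e4: "Suc m - Suc i = Suc d" "m - Suc i = d" "m - i = Suc d" by (simp_all add: m)
  have "qb r (Suc m) (Suc i) = Ep r m * (1 - r^(Suc i) * r^(Suc d)) / (Ep r i * (1 - r^(Suc i)) * (Ep r d * (1 - r^(Suc d))))"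
    using i unfolding qb_def e4 e1 e2 Ep_Suc[of r d] by simp
  moreover have "qb r m (Suc i) = Ep r m / (Ep r i * (1 - r^(Suc i)) * Ep r d)"
    using i False by (simp add: qb_def e2 e4)
  moreover have "qb r m i = Ep r m / (Ep r i * (Ep r d * (1 - r^(Suc d))))"
    using i by (simp add: qb_def e3)
  ultimately show ?thesis using pi A pascal_aux[of "Ep r i" "Ep r d" "r^(Suc i)" "r^(Suc d)" "Ep r m"]
    unfolding e4 by simp
qed

fun tm :: "nat \<Rightarrow> nat" where
  "tm 0 = 0" | "tm (Suc i) = tri i"

lemma tm_Suc': "tm (Suc i) = tm i + i"
  by (cases i) (simp_all add: tri_Suc)

lemma qbinomial:
  assumes r: "0 < r" "r < 1"
  shows "(\<Prod>k<m. 1 + y * r^k) = (\<Sum>i\<le>m. qb r m i * r^(tm i) * y^i)"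
proof (induction m)
  case 0
  then show ?case using r by simp
next
  case (Suc m)
  have "(\<Prod>k<Suc m. 1 + y * r^k) = (\<Sum>i\<le>m. qb r m i * r^(tm i) * y^i) * (1 + y * r^m)"
    using Suc by simp
  also have "\<dots> = (\<Sum>i\<le>m. qb r m i * r^(tm i) * y^i) + (\<Sum>i\<le>m. qb r m i * r^(tm i) * r^m * y^(Suc i))"
    by (simp add: algebra_simps sum_distrib_left sum_distrib_right sum.distrib)
  also have "(\<Sum>i\<le>m. qb r m i * r^(tm i) * y^i) = 1 + (\<Sum>i\<le>m. qb r m (Suc i) * r^(tm (Suc i)) * y^(Suc i))"
  proof -
    have z: "qb r m (Suc m) = 0" by (simp add: qb_def)
    show ?thesis using r sum.atMost_Suc_shift[of "\<lambda>i. qb r m i * r^(tm i) * y^i" m]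
      by (simp add: z)
  qed
  also have "(\<Sum>i\<le>m. qb r m i * r^(tm i) * r^m * y^(Suc i)) = (\<Sum>i\<le>m. r^(m-i) * qb r m i * r^(tm (Suc i)) * y^(Suc i))"
  proof (rule sum.cong)
    fix i assume "i \<in> {..m}"
    then have "r^m = r^(m-i) * r^i" by (simp add: power_add[symmetric])
    moreover have "r^(tm (Suc i)) = r^(tm i) * r^i" by (simp only: tm_Suc' power_add)
    ultimately show "qb r m i * r^(tm i) * r^m * y^(Suc i) = r^(m-i) * qb r m i * r^(tm (Suc i)) * y^(Suc i)"
      by (simp only:) (simp add: algebra_simps)
  qed simp
  finally have "(\<Prod>k<Suc m. 1 + y * r^k) = 1 + (\<Sum>i\<le>m. (qb r m (Suc i) + r^(m-i) * qb r m i) * r^(tm (Suc i)) * y^(Suc i))"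
    by (simp add: sum.distrib algebra_simps)
  also have "\<dots> = 1 + (\<Sum>i\<le>m. qb r (Suc m) (Suc i) * r^(tm (Suc i)) * y^(Suc i))"
    using qb_pascal[OF r] by (intro arg_cong2[where f="(+)"] sum.cong) auto
  also have "\<dots> = (\<Sum>i\<le>Suc m. qb r (Suc m) i * r^(tm i) * y^i)"
    using r sum.atMost_Suc_shift[of "\<lambda>i. qb r (Suc m) i * r^(tm i) * y^i" m] by (simp del: sum.atMost_Suc)
  finally show ?case .
qed

lemma tri2: "2 * tri k = k * (k + 1)"
  unfolding tri_def by simp

lemma tm_tri: "tm d + d = tri d"
  using tm_Suc'[of d] by simp

lemma tri_add: "tri (j + d) = tri j + j * d + tri d"
proof (induction d)
  case (Suc d)
  have "tri (j + Suc d) = tri (j + d) + Suc (j + d)" by (simp add: tri_Suc)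
  also have "\<dots> = tri j + j * Suc d + tri (Suc d)" using Suc by (simp add: tri_Suc)
  finally show ?case .
qed simp

lemma tri_tm: "tri d + tm d = d * d"
proof -
  have "tm d + d = tri d" by (rule tm_tri)
  moreover have "2 * tri d = d * d + d" using tri2[of d] by simp
  ultimately show ?thesis by linarith
qed

lemma exp_id1:
  assumes "j \<le> n"
  shows "tri n + tm (n - j) = n * (n - j) + tri j"
proof -
  obtain d where n: "n = j + d" using assms le_Suc_ex by blast
  have "tri (j + d) + tm d = tri j + j * d + (tri d + tm d)" by (simp add: tri_add)
  also have "\<dots> = tri j + j * d + d * d" by (simp add: tri_tm)
  also have "\<dots> = (j + d) * d + tri j" by (simp add: add_mult_distrib)
  finally show ?thesis by (simp add: n)
qed

lemma exp_id2:
  shows "tm (n + 1 + k) + tri n = n * (n + 1 + k) + tri k"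
proof -
  have "tm (n + 1 + k) = tri (n + k)" by simp
  also have "\<dots> = tri n + n * k + tri k" by (rule tri_add)
  finally have "tm (n + 1 + k) + tri n = 2 * tri n + n * k + tri k" by simp
  also have "\<dots> = n * (n + 1 + k) + tri k" using tri2[of n] by (simp add: add_mult_distrib2)
  finally show ?thesis .
qed

lemma qb_sym:
  assumes "j \<le> n"
  shows "qb r (2*n) (n - j) = qb r (2*n) (n + j)"
proof -
  have "2*n - (n - j) = n + j" "2*n - (n+j) = n - j" using assms by auto
  then show ?thesis using assms by (simp add: qb_def mult.commute)
qed

lemma prod_split1:
  fixes x r :: real and n :: nat
  assumes r: "0 < r" and x: "x \<noteq> 0"
  defines "y \<equiv> 1 / (r^n * x)"
  shows "(\<Prod>k=1..n. 1 + x * r^k) = x^n * r^(tri n) * (\<Prod>i<n. 1 + y * r^i)"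
proof -
  have "(\<Prod>k=1..n. 1 + x * r^k) = (\<Prod>k=1..n. (x * r^k) * (1 + y * r^(n-k)))"
  proof (rule prod.cong)
    fix k assume k: "k \<in> {1..n}"
    then have "r^n = r^k * r^(n-k)" by (simp add: power_add[symmetric])
    then show "1 + x * r^k = (x * r^k) * (1 + y * r^(n-k))"
      using r x unfolding y_def by (simp add: field_simps)
  qed simp
  also have "\<dots> = (\<Prod>k=1..n. x * r^k) * (\<Prod>k=1..n. 1 + y * r^(n-k))"
    by (rule prod.distrib)
  also have "(\<Prod>k=1..n. x * r^k) = x^n * r^(tri n)"
  proof (induction n)
    case (Suc n)
    then show ?case by (simp add: prod.nat_ivl_Suc' tri_Suc power_add algebra_simps)
  qed simp
  also have "(\<Prod>k=1..n. 1 + y * r^(n-k)) = (\<Prod>i<n. 1 + y * r^i)"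
    by (rule prod.reindex_bij_witness[where i="\<lambda>i. n - i" and j="\<lambda>k. n - k"]) auto
  finally show ?thesis by simp
qed

lemma prod_split2:
  fixes x r :: real and n :: nat
  assumes r: "0 < r" and x: "x \<noteq> 0"
  defines "y \<equiv> 1 / (r^n * x)"
  shows "(\<Prod>k=1..n. 1 + r^(k-1) / x) = (\<Prod>i\<in>{n..<2*n}. 1 + y * r^i)"
proof -
  have "(\<Prod>k=1..n. 1 + r^(k-1) / x) = (\<Prod>i\<in>{n..<2*n}. 1 + r^(i-n) / x)"
    by (rule prod.reindex_bij_witness[where i="\<lambda>i. i + 1 - n" and j="\<lambda>k. k - 1 + n"]) auto
  also have "\<dots> = (\<Prod>i\<in>{n..<2*n}. 1 + y * r^i)"
  proof (rule prod.cong)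
    fix i assume "i \<in> {n..<2*n}"
    then have "r^i = r^n * r^(i-n)" by (simp add: power_add[symmetric])
    then show "1 + r^(i-n) / x = 1 + y * r^i" using r x unfolding y_def by (simp add: field_simps)
  qed simp
  finally show ?thesis .
qed

lemma jtp_finite:
  fixes x r :: real and n :: nat
  assumes r: "0 < r" "r < 1" and x: "x \<noteq> 0"
  shows "(\<Prod>k=1..n. (1 + x * r^k) * (1 + r^(k-1) / x))
     = (\<Sum>j\<le>n. qb r (2*n) (n+j) * r^(tri j) * x^j)
     + (\<Sum>k<n. qb r (2*n) (n+1+k) * r^(tri k) * (1/x)^(Suc k))"
proof -
  define y where "y = 1 / (r^n * x)"
  define g where "g i = qb r (2*n) i * r^(tm i) * y^i" for i
  have "(\<Prod>k=1..n. (1 + x * r^k) * (1 + r^(k-1) / x))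
      = (\<Prod>k=1..n. 1 + x * r^k) * (\<Prod>k=1..n. 1 + r^(k-1) / x)"
    by (rule prod.distrib)
  also have "\<dots> = x^n * r^(tri n) * ((\<Prod>i<n. 1 + y * r^i) * (\<Prod>i\<in>{n..<2*n}. 1 + y * r^i))"
    using prod_split1[OF r(1) x, of n] prod_split2[OF r(1) x, of n] unfolding y_def by simp
  also have "(\<Prod>i<n. 1 + y * r^i) * (\<Prod>i\<in>{n..<2*n}. 1 + y * r^i) = (\<Prod>i<2*n. 1 + y * r^i)"
  proof -
    have "{..<2*n} = {..<n} \<union> {n..<2*n}" by auto
    moreover have "(\<Prod>i\<in>{..<n} \<union> {n..<2*n}. 1 + y * r^i) = (\<Prod>i<n. 1 + y * r^i) * (\<Prod>i\<in>{n..<2*n}. 1 + y * r^i)"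
      by (rule prod.union_disjoint) auto
    ultimately show ?thesis by simp
  qed
  also have "\<dots> = (\<Sum>i\<le>2*n. g i)" unfolding g_def by (rule qbinomial[OF r])
  also have "(\<Sum>i\<le>2*n. g i) = (\<Sum>i\<le>n. g i) + (\<Sum>i\<in>{n+1..2*n}. g i)"
  proof -
    have "{..2*n} = {..n} \<union> {n+1..2*n}" by auto
    moreover have "(\<Sum>i\<in>{..n} \<union> {n+1..2*n}. g i) = (\<Sum>i\<le>n. g i) + (\<Sum>i\<in>{n+1..2*n}. g i)"
      by (rule sum.union_disjoint) auto
    ultimately show ?thesis by simp
  qed
  also have "(\<Sum>i\<le>n. g i) = (\<Sum>j\<le>n. g (n - j))"
    by (rule sum.reindex_bij_witness[where i="\<lambda>i. n - i" and j="\<lambda>k. n - k"]) auto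
  also have "(\<Sum>i\<in>{n+1..2*n}. g i) = (\<Sum>k<n. g (n + 1 + k))"
    by (rule sum.reindex_bij_witness[where j="\<lambda>i. i - (n+1)" and i="\<lambda>k. n + 1 + k"]) auto
  finally have main: "(\<Prod>k=1..n. (1 + x * r^k) * (1 + r^(k-1) / x))
      = x^n * r^(tri n) * ((\<Sum>j\<le>n. g (n - j)) + (\<Sum>k<n. g (n + 1 + k)))" .
  have t1: "x^n * r^(tri n) * g (n - j) = qb r (2*n) (n+j) * r^(tri j) * x^j" if j: "j \<le> n" for j
  proof -
    have e: "r^(tri n) * r^(tm (n-j)) = (r^n)^(n-j) * r^(tri j)"
      using exp_id1[OF j] by (simp add: power_add[symmetric] power_mult[symmetric])
    have xe: "x^n = x^j * x^(n-j)" using j by (simp add: power_add[symmetric])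
    have "x^n * r^(tri n) * g (n - j) = qb r (2*n) (n - j) * (r^(tri n) * r^(tm (n-j))) * (x^n * y^(n-j))"
      unfolding g_def by (simp add: algebra_simps)
    also have "\<dots> = qb r (2*n) (n - j) * ((r^n)^(n-j) * r^(tri j)) * (x^j / (r^n)^(n-j))"
      unfolding e xe y_def using r x by (simp add: power_divide power_mult_distrib field_simps)
    also have "\<dots> = qb r (2*n) (n+j) * r^(tri j) * x^j"
      using r qb_sym[OF j, of r] by (simp add: field_simps)
    finally show ?thesis .
  qed
  have t2: "x^n * r^(tri n) * g (n + 1 + k) = qb r (2*n) (n+1+k) * r^(tri k) * (1/x)^(Suc k)" for k
  proof -
    have e: "r^(tm (n+1+k)) * r^(tri n) = (r^n)^(n+1+k) * r^(tri k)"
      using exp_id2[of n k] by (simp add: power_add[symmetric] power_mult[symmetric])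
    have "x^n * r^(tri n) * g (n + 1 + k) = qb r (2*n) (n+1+k) * (r^(tm (n+1+k)) * r^(tri n)) * (x^n * y^(n+1+k))"
      unfolding g_def by (simp add: algebra_simps)
    also have "\<dots> = qb r (2*n) (n+1+k) * ((r^n)^(n+1+k) * r^(tri k)) * (x^n / ((r^n)^(n+1+k) * x^(n+1+k)))"
      unfolding e y_def using r x by (simp add: power_divide power_mult_distrib field_simps)
    also have "x^n / ((r^n)^(n+1+k) * x^(n+1+k)) = (1/x)^(Suc k) / (r^n)^(n+1+k)"
      using r x by (simp add: power_add power_divide field_simps)
    finally show ?thesis using r by (simp add: field_simps)
  qed
  show ?thesis unfolding main
    by (simp add: distrib_left sum_distrib_left t1 t2 del: One_nat_def)
qed

definition cc :: "real \<Rightarrow> nat \<Rightarrow> nat \<Rightarrow> real" where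
  "cc r n j = Ep r n ^ 2 / (Ep r (n + j) * Ep r (n - j))"

lemma Ep_shift: "Ep r (m + j) = Ep r m * (\<Prod>i=1..j. 1 - r^(m+i))"
proof (induction j)
  case (Suc j)
  then show ?case by (simp add: Ep_Suc prod.nat_ivl_Suc')
qed simp

lemma cc_qb1:
  assumes r: "0 < r" "r < 1" and j: "j \<le> n"
  shows "Ep r n ^ 2 / Ep r (2*n) * qb r (2*n) (n+j) = cc r n j"
proof -
  have "2*n - (n+j) = n - j" by simp
  moreover have nz: "\<And>k. Ep r k \<noteq> 0" using Ep_pos[OF r] by (metis less_irrefl)
  ultimately show ?thesis using j unfolding qb_def cc_def by (simp add: field_simps)
qed

lemma cc_qb2:
  assumes r: "0 < r" "r < 1" and k: "k < n"
  shows "Ep r n ^ 2 / Ep r (2*n) * qb r (2*n) (n+1+k) = cc r n (Suc k)"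
proof -
  have "n + 1 + k = n + Suc k" by simp
  then show ?thesis using cc_qb1[OF r, of "Suc k" n] k by simp
qed

lemma prod_ge_pos: 
  fixes r :: real assumes "0 < r" "r < 1"
  shows "(1 - r)^j \<le> (\<Prod>i=1..j. 1 - r^(m+i))"
proof -
  have "(\<Prod>i=1..j. (1 - r)) \<le> (\<Prod>i=1..j. 1 - r^(m+i))"
  proof (rule prod_mono)
    fix i assume "i \<in> {1..j}"
    then have "r^(m+i) \<le> r^1" using assms by (intro power_decreasing) auto
    then show "0 \<le> 1 - r \<and> 1 - r \<le> 1 - r^(m+i)" using assms by simp
  qed
  then show ?thesis by simp
qed

lemma prod_le1:
  fixes r :: real assumes "0 < r" "r < 1"
  shows "0 < (\<Prod>i=1..j. 1 - r^(m+i))" "(\<Prod>i=1..j. 1 - r^(m+i)) \<le> 1"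
proof -
  show "0 < (\<Prod>i=1..j. 1 - r^(m+i))"
    using assms by (intro prod_pos) (auto simp: power_less_one_iff)
  show "(\<Prod>i=1..j. 1 - r^(m+i)) \<le> 1"
    using assms by (intro prod_le_1) (auto intro!: power_le_one)
qed

lemma cc_bounds:
  assumes r: "0 < r" "r < 1" and j: "j \<le> n"
  shows "0 \<le> cc r n j" "cc r n j \<le> (1/(1-r))^j"
proof -
  obtain d where n: "n = d + j" using j by (metis le_add_diff_inverse2)
  have nd: "n - j = d" using n by simp
  define P where "P = (\<Prod>i=1..j. 1 - r^(n+i))"
  define Q where "Q = (\<Prod>i=1..j. 1 - r^(d+i))"
  have e1: "Ep r (n + j) = Ep r n * P" unfolding P_def by (rule Ep_shift)
  have e2: "Ep r n = Ep r d * Q" unfolding Q_def n by (rule Ep_shift)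
  have P: "(1-r)^j \<le> P" "0 < P" unfolding P_def using prod_ge_pos[OF r] prod_le1[OF r] by auto
  have Q: "0 < Q" "Q \<le> 1" unfolding Q_def using prod_le1[OF r] by auto
  have pos: "0 < Ep r d" using Ep_pos[OF r] by auto
  have ccv: "cc r n j = Q / P"
    unfolding cc_def nd e1 using pos P Q by (simp add: e2 power2_eq_square field_simps)
  show "0 \<le> cc r n j" using ccv P Q by simp
  have "Q / P \<le> 1 / P" using Q P by (simp add: divide_right_mono)
  also have "1 / P \<le> 1 / (1-r)^j" using P r by (intro divide_left_mono) auto
  finally show "cc r n j \<le> (1/(1-r))^j" using ccv by (simp add: power_one_over)
qed

lemma cc_lim:
  assumes r: "0 < r" "r < 1"
  shows "(\<lambda>n. cc r n j) \<longlonglongrightarrow> 1"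
proof (rule LIMSEQ_offset[where k=j])
  define h where "h n = (\<Prod>i=1..j. 1 - r^(n+i))" for n
  have hl: "(\<lambda>n. h (n + m)) \<longlonglongrightarrow> 1" for m
  proof -
    have "(\<lambda>n. \<Prod>i=1..j. 1 - r^(n+m+i)) \<longlonglongrightarrow> (\<Prod>i=1..j. 1 - 0)"
    proof (rule tendsto_prod[where f="\<lambda>i n. 1 - r^(n+m+i)"], intro tendsto_diff tendsto_const)
      fix i
      have "(\<lambda>n. r^n * r^(m+i)) \<longlonglongrightarrow> 0 * r^(m+i)"
        using r by (intro tendsto_mult LIMSEQ_power_zero tendsto_const) auto
      then show "(\<lambda>n. r^(n+m+i)) \<longlonglongrightarrow> 0" by (simp add: power_add mult.assoc)
    qed
    then show ?thesis unfolding h_def by simp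
  qed
  have hp: "0 < h n" for n unfolding h_def using prod_le1[OF r] by auto
  have eq: "cc r (n + j) j = h n / h (n + j)" for n
  proof -
    have e1: "Ep r (n + j) = Ep r n * h n" unfolding h_def by (rule Ep_shift)
    have e2: "Ep r (n + j + j) = Ep r (n + j) * h (n + j)" unfolding h_def by (rule Ep_shift)
    have "cc r (n+j) j = Ep r (n+j)^2 / (Ep r (n+j+j) * Ep r n)" unfolding cc_def by simp
    also have "\<dots> = (Ep r n * h n)^2 / (Ep r n * h n * h (n+j) * Ep r n)" by (simp only: e2 e1)
    also have "\<dots> = h n / h (n+j)" using Ep_pos[OF r, of n] hp[of n] hp[of "n+j"]
      by (simp add: power2_eq_square field_simps)
    finally show ?thesis .
  qed
  have "(\<lambda>n. h (n + 0) / h (n + j)) \<longlonglongrightarrow> 1 / 1"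
    by (intro tendsto_divide hl) auto
  then show "(\<lambda>n. cc r (n + j) j) \<longlonglongrightarrow> 1" unfolding eq by simp
qed

definition Th :: "real \<Rightarrow> real \<Rightarrow> real" where
  "Th r x = F r x + F r (1/x) / x"

lemma rhs1_lim:
  assumes r: "0 < r" "r < 1"
  shows "(\<lambda>n. \<Sum>j\<le>n. cc r n j * r^(tri j) * x^j) \<longlonglongrightarrow> F r x"
proof -
  define a where "a j n = (if j \<le> n then cc r n j else 0) * (r^(tri j) * x^j)" for j n
  define M where "M j = r^(tri j) * (\<bar>x\<bar>/(1-r))^j" for j
  have lim: "(\<lambda>n. a j n) \<longlonglongrightarrow> r^(tri j) * x^j" for j
  proof -
    have "(\<lambda>n. cc r n j * (r^(tri j) * x^j)) \<longlonglongrightarrow> 1 * (r^(tri j) * x^j)"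
      by (intro tendsto_mult cc_lim[OF r] tendsto_const)
    moreover have "eventually (\<lambda>n. cc r n j * (r^(tri j) * x^j) = a j n) sequentially"
      using eventually_ge_at_top[of j] by eventually_elim (simp add: a_def)
    ultimately show ?thesis using tendsto_cong by force
  qed
  have bound: "norm (a j n) \<le> M j" for j n
  proof (cases "j \<le> n")
    case True
    have "norm (a j n) = cc r n j * (r^(tri j) * \<bar>x\<bar>^j)"
      using True cc_bounds(1)[OF r True] r by (simp add: a_def abs_mult power_abs)
    also have "\<dots> \<le> (1/(1-r))^j * (r^(tri j) * \<bar>x\<bar>^j)"
      using cc_bounds(2)[OF r True] r by (intro mult_right_mono) auto
    also have "\<dots> = M j" unfolding M_def by (simp add: power_divide)
    finally show ?thesis .
  next
    case False
    then show ?thesis using r by (simp add: a_def M_def)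
  qed
  have sM: "summable M" unfolding M_def using summable_tri[of r] r by simp
  have T: "((\<lambda>n. suminf (\<lambda>j. a j n)) \<longlonglongrightarrow> suminf (\<lambda>j. r^(tri j) * x^j))"
  proof -
    have ev: "eventually (\<lambda>(k,n). norm (a k n) \<le> M k) (at_top \<times>\<^sub>F sequentially)"
      by (rule always_eventually, clarify, rule bound)
    show ?thesis using tannerys_theorem[where a=a and b="\<lambda>j. r^(tri j) * x^j", OF lim ev sM] by simp
  qed
  have "suminf (\<lambda>j. a j n) = (\<Sum>j\<le>n. cc r n j * r^(tri j) * x^j)" for n
    by (subst suminf_finite[of "{..n}"]) (auto simp: a_def mult.assoc)
  then show ?thesis using T unfolding F_def by simp
qed

lemma rhs2_lim:
  assumes r: "0 < r" "r < 1"
  shows "(\<lambda>n. \<Sum>k<n. cc r n (Suc k) * r^(tri k) * (1/x)^(Suc k)) \<longlonglongrightarrow> F r (1/x) / x"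
proof -
  define y where "y = 1/x"
  define a where "a k n = (if k < n then cc r n (Suc k) else 0) * (r^(tri k) * y^(Suc k))" for k n
  define M where "M k = (\<bar>y\<bar>/(1-r)) * (r^(tri k) * (\<bar>y\<bar>/(1-r))^k)" for k
  have lim: "(\<lambda>n. a k n) \<longlonglongrightarrow> r^(tri k) * y^(Suc k)" for k
  proof -
    have "(\<lambda>n. cc r n (Suc k) * (r^(tri k) * y^(Suc k))) \<longlonglongrightarrow> 1 * (r^(tri k) * y^(Suc k))"
      by (intro tendsto_mult cc_lim[OF r] tendsto_const)
    moreover have "eventually (\<lambda>n. cc r n (Suc k) * (r^(tri k) * y^(Suc k)) = a k n) sequentially"
      using eventually_gt_at_top[of k] by eventually_elim (simp add: a_def)
    ultimately show ?thesis using tendsto_cong by force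
  qed
  have bound: "norm (a k n) \<le> M k" for k n
  proof (cases "k < n")
    case True
    then have kn: "Suc k \<le> n" by simp
    have "norm (a k n) = cc r n (Suc k) * (r^(tri k) * \<bar>y\<bar>^(Suc k))"
      using True cc_bounds(1)[OF r kn] r by (simp add: a_def abs_mult power_abs)
    also have "\<dots> \<le> (1/(1-r))^(Suc k) * (r^(tri k) * \<bar>y\<bar>^(Suc k))"
      using cc_bounds(2)[OF r kn] r by (intro mult_right_mono) auto
    also have "\<dots> = M k" unfolding M_def by (simp add: power_divide)
    finally show ?thesis .
  next
    case False
    then show ?thesis using r by (simp add: a_def M_def)
  qed
  have sM: "summable M" unfolding M_def using summable_tri[of r] r by (intro summable_mult) simp
  have T: "((\<lambda>n. suminf (\<lambda>k. a k n)) \<longlonglongrightarrow> suminf (\<lambda>k. r^(tri k) * y^(Suc k)))"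
  proof -
    have ev: "eventually (\<lambda>(k,n). norm (a k n) \<le> M k) (at_top \<times>\<^sub>F sequentially)"
      by (rule always_eventually, clarify, rule bound)
    show ?thesis using tannerys_theorem[where a=a and b="\<lambda>k. r^(tri k) * y^(Suc k)", OF lim ev sM] by simp
  qed
  have "suminf (\<lambda>k. a k n) = (\<Sum>k<n. cc r n (Suc k) * r^(tri k) * y^(Suc k))" for n
    by (subst suminf_finite[of "{..<n}"]) (auto simp: a_def mult.assoc)
  moreover have "suminf (\<lambda>k. r^(tri k) * y^(Suc k)) = F r y / x"
  proof -
    have "(\<lambda>k. r^(tri k) * y^(Suc k)) = (\<lambda>k. y * (r^(tri k) * y^k))" by (auto simp: algebra_simps)
    moreover have "(\<Sum>k. y * (r^(tri k) * y^k)) = y * F r y"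
      unfolding F_def using summable_tri[of r y] r by (intro suminf_mult) auto
    ultimately show ?thesis by (simp add: y_def)
  qed
  ultimately show ?thesis using T unfolding y_def by simp
qed

lemma lhs_lim:
  assumes r: "0 < r" "r < 1" and x: "x \<noteq> 0"
  shows "(\<lambda>n. Ep r n ^ 2 / Ep r (2*n) * (\<Prod>k=1..n. (1 + x * r^k) * (1 + r^(k-1) / x))) \<longlonglongrightarrow> Th r x"
proof -
  have eq: "Ep r n ^ 2 / Ep r (2*n) * (\<Prod>k=1..n. (1 + x * r^k) * (1 + r^(k-1) / x))
     = (\<Sum>j\<le>n. cc r n j * r^(tri j) * x^j) + (\<Sum>k<n. cc r n (Suc k) * r^(tri k) * (1/x)^(Suc k))" for n
  proof -
    have "Ep r n ^ 2 / Ep r (2*n) * (\<Prod>k=1..n. (1 + x * r^k) * (1 + r^(k-1) / x))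
      = (\<Sum>j\<le>n. (Ep r n ^ 2 / Ep r (2*n) * qb r (2*n) (n+j)) * r^(tri j) * x^j)
      + (\<Sum>k<n. (Ep r n ^ 2 / Ep r (2*n) * qb r (2*n) (n+1+k)) * r^(tri k) * (1/x)^(Suc k))"
      unfolding jtp_finite[OF r x] by (simp add: distrib_left sum_distrib_left mult.assoc)
    also have "\<dots> = (\<Sum>j\<le>n. cc r n j * r^(tri j) * x^j) + (\<Sum>k<n. cc r n (Suc k) * r^(tri k) * (1/x)^(Suc k))"
      using cc_qb1[OF r] cc_qb2[OF r] by (intro arg_cong2[where f="(+)"] sum.cong) auto
    finally show ?thesis .
  qed
  show ?thesis unfolding eq Th_def by (intro tendsto_add rhs1_lim[OF r] rhs2_lim[OF r])
qed

lemma Ep_Suc_le: assumes "0 < r" "r < 1" shows "Ep r (Suc n) \<le> Ep r n"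
proof -
  have "0 < Ep r n" using Ep_pos[OF assms] by auto
  moreover have "0 \<le> r^(Suc n)" using assms by simp
  ultimately show ?thesis by (simp add: Ep_Suc mult_left_le)
qed

lemma Ep_decseq: assumes "0 < r" "r < 1" shows "decseq (Ep r)"
  using Ep_Suc_le[OF assms] by (simp add: decseq_Suc_iff)

definition EL :: "real \<Rightarrow> real" where "EL r = lim (Ep r)"

lemma EL_props:
  assumes r: "0 < r" "r < 1"
  shows "Ep r \<longlonglongrightarrow> EL r" "\<And>n. EL r \<le> Ep r n" "0 \<le> EL r"
proof -
  obtain L where L: "Ep r \<longlonglongrightarrow> L" "\<forall>i. L \<le> Ep r i"
    using decseq_convergent[OF Ep_decseq[OF r], of 0] Ep_pos[OF r] by (metis less_imp_le)
  have "EL r = L" unfolding EL_def using L(1) by (rule limI)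
  then show "Ep r \<longlonglongrightarrow> EL r" "\<And>n. EL r \<le> Ep r n" using L by auto
  show "0 \<le> EL r" using L(1) Ep_pos[OF r] \<open>EL r = L\<close>
    by (metis LIMSEQ_le_const less_imp_le)
qed

lemma prod_one_minus_ge:
  fixes a :: "nat \<Rightarrow> real"
  assumes "finite I" "\<And>i. i \<in> I \<Longrightarrow> 0 \<le> a i \<and> a i \<le> 1"
  shows "1 - (\<Sum>i\<in>I. a i) \<le> (\<Prod>i\<in>I. 1 - a i)"
  using assms
proof (induction I rule: finite_induct)
  case (insert i I)
  have IH: "1 - (\<Sum>i\<in>I. a i) \<le> (\<Prod>i\<in>I. 1 - a i)" using insert by auto
  have ai: "0 \<le> a i" "a i \<le> 1" using insert by auto
  have S: "0 \<le> (\<Sum>i\<in>I. a i)" using insert by (intro sum_nonneg) auto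
  have "1 - (a i + (\<Sum>i\<in>I. a i)) \<le> (1 - a i) * (1 - (\<Sum>i\<in>I. a i))"
    using ai S by (simp add: algebra_simps)
  also have "\<dots> \<le> (1 - a i) * (\<Prod>i\<in>I. 1 - a i)"
    using IH ai by (intro mult_left_mono) auto
  finally show ?case using insert by simp
qed simp

lemma Ep_double:
  assumes r: "0 < r" "r < 1"
  shows "Ep r n * (1 - r^(n+1) / (1-r)) \<le> Ep r (2*n)"
proof -
  have e: "Ep r (2*n) = Ep r n * (\<Prod>i=1..n. 1 - r^(n+i))"
    using Ep_shift[of r n n] by (simp add: mult_2)
  have "(\<Sum>i=1..n. r^(n+i)) = r^(n+1) * (\<Sum>i<n. r^i)"
  proof -
    have "(\<Sum>i=1..n. r^(n+i)) = (\<Sum>i<n. r^(n+1+i))"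
      by (rule sum.reindex_bij_witness[where j="\<lambda>i. i - 1" and i="\<lambda>i. i + 1"]) auto
    also have "\<dots> = r^(n+1) * (\<Sum>i<n. r^i)" by (simp add: sum_distrib_left power_add mult.assoc)
    finally show ?thesis .
  qed
  also have "(\<Sum>i<n. r^i) \<le> 1/(1-r)"
    using r by (simp add: sum_gp_strict field_simps)
  then have "r^(n+1) * (\<Sum>i<n. r^i) \<le> r^(n+1) * (1/(1-r))"
    using r by (intro mult_left_mono) auto
  finally have s: "(\<Sum>i=1..n. r^(n+i)) \<le> r^(n+1) / (1-r)" by simp
  have "1 - (\<Sum>i=1..n. r^(n+i)) \<le> (\<Prod>i=1..n. 1 - r^(n+i))"
    using r by (intro prod_one_minus_ge) (auto simp: power_le_one)
  then have "1 - r^(n+1) / (1-r) \<le> (\<Prod>i=1..n. 1 - r^(n+i))" using s by linarith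
  then show ?thesis unfolding e using Ep_pos[OF r, of n] by (intro mult_left_mono) auto
qed

lemma Pn_bounds:
  assumes r: "0 < r" "r < 1" and w: "1 \<le> w" "w \<le> 1/r"
  shows "0 \<le> (\<Prod>k=1..n. (1 + (-w) * r^k) * (1 + r^(k-1) / (-w)))"
    "(\<Prod>k=1..n. (1 + (-w) * r^k) * (1 + r^(k-1) / (-w))) \<le> Ep r n * Ep r n"
proof -
  have wr: "w * r \<le> 1" using w r by (simp add: field_simps)
  have fb: "0 \<le> (1 + (-w) * r^k) * (1 + r^(k-1) / (-w)) \<and> (1 + (-w) * r^k) * (1 + r^(k-1) / (-w)) \<le> (1 - r^k) * (1 - r^k)"
    if k: "k \<in> {1..n}" for k
  proof -
    obtain m where km: "k = Suc m" using k by (cases k) auto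
    have a1: "w * r^k \<le> r^m" using wr r by (simp add: km mult.assoc[symmetric] mult_right_le_one_le)
    have a1': "w * r^k \<le> 1" using a1 r by (meson order.trans power_le_one less_imp_le)
    have a2: "r^k \<le> w * r^k" using w r by (simp add: mult_le_cancel_right1)
    have b1: "r^(k-1) / w \<le> 1" using w r by (simp add: km field_simps) (meson order.trans power_le_one less_imp_le)
    have b2: "r^k \<le> r^(k-1) / w"
    proof -
      have "r^k * w \<le> r^k * (1/r)" using w r by (intro mult_left_mono) auto
      also have "\<dots> = r^(k-1)" using r by (simp add: km)
      finally show ?thesis using w by (simp add: field_simps)
    qed
    have e1: "1 + (-w) * r^k = 1 - w * r^k" by simp
    have e2: "1 + r^(k-1) / (-w) = 1 - r^(k-1) / w" by simp
    show ?thesis unfolding e1 e2 using a1' a2 b1 b2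
      by (auto intro!: mult_mono mult_nonneg_nonneg)
  qed
  show "0 \<le> (\<Prod>k=1..n. (1 + (-w) * r^k) * (1 + r^(k-1) / (-w)))"
    using fb by (intro prod_nonneg) auto
  have "(\<Prod>k=1..n. (1 + (-w) * r^k) * (1 + r^(k-1) / (-w))) \<le> (\<Prod>k=1..n. (1 - r^k) * (1 - r^k))"
    using fb by (intro prod_mono) auto
  also have "\<dots> = Ep r n * Ep r n" by (simp add: Ep_def prod.distrib)
  finally show "(\<Prod>k=1..n. (1 + (-w) * r^k) * (1 + r^(k-1) / (-w))) \<le> Ep r n * Ep r n" .
qed

lemma Th_base_bound:
  assumes r: "0 < r" "r < 1" and w: "1 \<le> w" "w \<le> 1/r"
  shows "0 \<le> Th r (-w)" "Th r (-w) \<le> EL r ^ 3"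
proof -
  define P where "P n = (\<Prod>k=1..n. (1 + (-w) * r^k) * (1 + r^(k-1) / (-w)))" for n
  have wne: "-w \<noteq> 0" using w by auto
  have L: "(\<lambda>n. Ep r n ^ 2 / Ep r (2*n) * P n) \<longlonglongrightarrow> Th r (-w)"
    unfolding P_def by (rule lhs_lim[OF r wne])
  have Ppos: "0 \<le> P n" "P n \<le> Ep r n * Ep r n" for n unfolding P_def using Pn_bounds[OF r w] by auto
  have Epos: "0 < Ep r n" for n using Ep_pos[OF r] by auto
  show "0 \<le> Th r (-w)"
    by (rule LIMSEQ_le_const[OF L]) (use Ppos Epos in \<open>auto intro!: mult_nonneg_nonneg divide_nonneg_pos\<close>)
  define B where "B n = Ep r n ^ 3 / (1 - r^(n+1) / (1-r))" for n
  have rl: "(\<lambda>n. r^(n+1) / (1-r)) \<longlonglongrightarrow> 0"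
  proof -
    have "(\<lambda>n. r^n * (r / (1-r))) \<longlonglongrightarrow> 0 * (r/(1-r))"
      using r by (intro tendsto_mult LIMSEQ_power_zero tendsto_const) auto
    then show ?thesis by (simp add: field_simps)
  qed
  have BL: "B \<longlonglongrightarrow> EL r ^ 3 / (1 - 0)"
    unfolding B_def by (intro tendsto_divide tendsto_power tendsto_diff tendsto_const EL_props(1)[OF r] rl) auto
  obtain N where N0: "\<forall>n\<ge>N. norm (r^(n+1) / (1-r) - 0) < 1/2"
    using LIMSEQ_D[OF rl, of "1/2"] by auto
  have N: "\<And>n. n \<ge> N \<Longrightarrow> r^(n+1) / (1-r) < 1/2"
    using N0 by (metis abs_less_iff diff_zero real_norm_def)
  have le: "Ep r n ^ 2 / Ep r (2*n) * P n \<le> B n" if n: "n \<ge> N" for n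
  proof -
    have d: "0 < 1 - r^(n+1) / (1-r)" using N[OF n] by linarith
    have "Ep r n ^ 2 / Ep r (2*n) * P n \<le> Ep r n ^ 2 / Ep r (2*n) * (Ep r n * Ep r n)"
      using Ppos[of n] Epos[of n] Epos[of "2*n"] by (intro mult_left_mono) auto
    also have "\<dots> = Ep r n ^ 4 / Ep r (2*n)" by (simp add: power2_eq_square power4_eq_xxxx)
    also have "\<dots> \<le> Ep r n ^ 4 / (Ep r n * (1 - r^(n+1) / (1-r)))"
      using Ep_double[OF r, of n] Epos[of n] Epos[of "2*n"] d by (intro divide_left_mono mult_pos_pos) auto
    also have "\<dots> = B n"
    proof -
      have "Ep r n ^ 4 = Ep r n * Ep r n ^ 3" by (simp add: power_numeral_reduce)
      then show ?thesis unfolding B_def using Epos[of n] by simp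
    qed
    finally show ?thesis .
  qed
  have "Th r (-w) \<le> EL r ^ 3 / (1 - 0)"
    by (rule LIMSEQ_le[OF L BL]) (use le in auto)
  then show "Th r (-w) \<le> EL r ^ 3" by simp
qed

lemma Th_feq:
  assumes r: "0 < r" "r < 1" and x: "x \<noteq> 0"
  shows "Th r x = r * x * Th r (r * x)"
proof -
  have r0: "0 \<le> r" using r by simp
  have 1: "F r x = 1 + r * x * F r (r * x)" by (rule F_eq[OF r0 r(2)])
  have 2: "F r (1/(r*x)) = 1 + r * (1/(r*x)) * F r (r * (1/(r*x)))" by (rule F_eq[OF r0 r(2)])
  have e: "r * (1/(r*x)) = 1/x" using r x by simp
  show ?thesis unfolding Th_def using r x 1 2 unfolding e by (simp add: field_simps)
qed

lemma Th_iter: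
  assumes r: "0 < r" "r < 1" and x: "x \<noteq> 0"
  shows "Th r x = r^(tri n) * x^n * Th r (r^n * x)"
proof (induction n)
  case (Suc n)
  have nz: "r^n * x \<noteq> 0" using r x by simp
  have "Th r (r^n * x) = r * (r^n * x) * Th r (r * (r^n * x))" by (rule Th_feq[OF r nz])
  then show ?case using Suc by (simp add: tri_Suc power_add algebra_simps)
qed simp

lemma find_n:
  fixes r z :: real
  assumes r: "0 < r" "r < 1" and rz: "1 < r * z"
  obtains n where "1 \<le> n" "1 \<le> r^n * z" "r^(Suc n) * z \<le> 1" "\<And>m. r^(Suc m) * z \<le> 1 \<Longrightarrow> n \<le> m"
proof -
  define P where "P k = (r^(Suc k) * z \<le> 1)" for k
  have lim: "(\<lambda>k. r^k * (r * z)) \<longlonglongrightarrow> 0 * (r * z)"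
    using r by (intro tendsto_mult LIMSEQ_power_zero tendsto_const) auto
  obtain N where N: "\<forall>k\<ge>N. norm (r^k * (r*z) - 0) < 1" using LIMSEQ_D[OF lim, of 1] by auto
  have "P N" using N unfolding P_def by (auto simp: abs_less_iff mult.assoc mult.left_commute)
  define n where "n = (LEAST k. P k)"
  have Pn: "P n" unfolding n_def using \<open>P N\<close> by (rule LeastI)
  have min: "\<And>m. P m \<Longrightarrow> n \<le> m" unfolding n_def by (rule Least_le)
  have n1: "1 \<le> n"
  proof (rule ccontr)
    assume "\<not> 1 \<le> n" then have "n = 0" by simp
    then show False using Pn rz unfolding P_def by simp
  qed
  have "\<not> P (n - 1)" using min[of "n-1"] n1 by auto
  then have "1 \<le> r^n * z" unfolding P_def using n1 by simp
  then show ?thesis using that n1 Pn min unfolding P_def by blast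
qed

lemma F_recip_lower:
  assumes r: "0 < r" "r < 1" and z: "1 \<le> z"
  shows "1 - r / z \<le> F r (- (1/z))"
proof -
  have zp: "0 < z" using z by simp
  have a: "r^3 * (1/z) \<le> 1" using r z by (simp add: field_simps) (meson order.trans less_imp_le power_le_one)
  have L: "1 - r * (1/z) + r^3 * (1/z)^2 - r^6 * (1/z)^3 \<le> F r (-(1/z))"
    by (rule F_neg_lower[OF r _ a]) (use zp in simp)
  have "0 \<le> r^3 * (1/z)^2 - r^6 * (1/z)^3"
  proof -
    have "r^6 * (1/z)^3 = (r^3 * (1/z)^2) * (r^3 * (1/z))" by (simp add: power_mult_distrib[symmetric] eval_nat_numeral)
    also have "\<dots> \<le> (r^3 * (1/z)^2) * 1" using a r zp by (intro mult_left_mono) auto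
    finally show ?thesis by simp
  qed
  then show ?thesis using L by simp
qed

lemma S_from_Th:
  assumes r: "0 < r" "r < 1" and rz: "1 < r * z" and z: "z \<le> 484/100"
    and n: "1 \<le> r^n * z" "r^(Suc n) * z \<le> 1"
    and B: "r^(tri n) * z^n * EL r ^ 3 < (1 - r^2) / (484/100)"
  shows "0 < F r (-z)"
proof -
  have z1: "1 \<le> z"
  proof (rule ccontr)
    assume "\<not> 1 \<le> z" then have z1: "z < 1" by simp
    show False
    proof (cases "0 \<le> z")
      case True
      then have "r * z \<le> 1 * z" using r by (intro mult_right_mono) auto
      then show False using z1 rz by simp
    next
      case False
      then have "r * z < 0" using r by (simp add: mult_pos_neg)
      then show False using rz by simp
    qed
  qed
  have zp: "0 < z" using z1 by simp
  have eqF: "F r (-z) = Th r (-z) + F r (-(1/z)) / z"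
    unfolding Th_def by (simp add: field_simps)
  have w: "1 \<le> r^n * z" "r^n * z \<le> 1/r" using n r by (auto simp: field_simps)
  have it: "Th r (-z) = r^(tri n) * (-z)^n * Th r (r^n * (-z))"
    by (rule Th_iter[OF r]) (use zp in simp)
  have tb: "0 \<le> Th r (-(r^n*z))" "Th r (-(r^n*z)) \<le> EL r ^ 3" using Th_base_bound[OF r w] by auto
  have "\<bar>Th r (-z)\<bar> = r^(tri n) * z^n * Th r (-(r^n*z))"
    unfolding it using r zp tb by (simp add: abs_mult power_abs)
  also have "\<dots> \<le> r^(tri n) * z^n * EL r ^ 3"
    using tb r zp by (intro mult_left_mono) auto
  finally have thb: "\<bar>Th r (-z)\<bar> \<le> r^(tri n) * z^n * EL r ^ 3" .
  have fl: "1 - r/z \<le> F r (-(1/z))" by (rule F_recip_lower[OF r z1])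
  have "(1 - r^2) / (484/100) \<le> (1 - r/z) / z"
  proof -
    have iz: "1 / z \<le> r" using rz zp by (simp add: field_simps)
    have a: "r / z \<le> r^2"
    proof -
      have "r * (1/z) \<le> r * r" using iz r by (intro mult_left_mono) auto
      then show ?thesis by (simp add: power2_eq_square)
    qed
    have b: "1 / (484/100) \<le> 1 / z" using zp z by (intro divide_left_mono) auto
    have c: "0 \<le> 1 - r^2" using r by (simp add: power_le_one abs_square_le_1)
    have d: "0 \<le> 1 - r/z" using a c by linarith
    have "(1 - r^2) * (1 / (484/100)) \<le> (1 - r/z) * (1/z)"
      using a b c d zp by (intro mult_mono) auto
    then show ?thesis by simp
  qed
  also have "(1 - r/z) / z \<le> F r (-(1/z)) / z" using fl zp by (intro divide_right_mono) auto
  finally have "(1 - r^2) / (484/100) \<le> F r (-(1/z)) / z" .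
  then show ?thesis unfolding eqF using thb B by linarith
qed

lemma caseA:
  assumes r: "0 < r" "r < 1" and z: "0 \<le> z" and rz: "r * z \<le> 1"
  shows "0 < F r (-z)"
proof (cases "z = 0")
  case True then show ?thesis by simp
next
  case False
  then have zp: "0 < z" using z by simp
  have r2: "r^2 < 1" using r by (simp add: power_less_one_iff)
  have "r^3 * z = r^2 * (r * z)" by (simp add: power_numeral_reduce algebra_simps)
  also have "\<dots> \<le> r^2 * 1" using rz r by (intro mult_left_mono) auto
  finally have a: "r^3 * z < 1" using r2 by simp
  have L: "1 - r*z + r^3*z^2 - r^6*z^3 \<le> F r (-z)" by (rule F_neg_lower[OF r z]) (use a in simp)
  have "r^6 * z^3 = (r^3 * z^2) * (r^3 * z)" by (simp add: power_mult_distrib[symmetric] eval_nat_numeral)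
  also have "\<dots> < (r^3 * z^2) * 1" using a r zp by (intro mult_strict_left_mono) auto
  finally have "0 < r^3*z^2 - r^6*z^3" by simp
  then show ?thesis using L rz by linarith
qed

definition gg :: "real \<Rightarrow> real \<Rightarrow> real" where
  "gg r u = 1 - u + r * u^2 - r^3 * u^3"

lemma cubic_bern:
  fixes c L s :: real
  defines "q0 \<equiv> c - c^3" and "q1 \<equiv> -L + 2*c*L - 3*c^3*L" and "q2 \<equiv> c*L^2 - 3*c^3*L^2" and "q3 \<equiv> -(c^3*L^3)"
  assumes s: "0 \<le> s" "s \<le> 1"
    and b: "0 < q0" "0 < q0 + q1/3" "0 < q0 + 2*q1/3 + q2/3" "0 < q0 + q1 + q2 + q3"
  shows "0 < gg c (1 + s*L)"
proof -
  define b0 where "b0 = q0"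
  define b1 where "b1 = q0 + q1/3"
  define b2 where "b2 = q0 + 2*q1/3 + q2/3"
  define b3 where "b3 = q0 + q1 + q2 + q3"
  have id: "gg c (1 + s*L) = b0*(1-s)^3 + b1*(3* s*(1-s)^2) + b2*(3* s^2*(1-s)) + b3* s^3"
    unfolding gg_def b0_def b1_def b2_def b3_def q0_def q1_def q2_def q3_def by algebra
  define m where "m = min (min b0 b1) (min b2 b3)"
  have m0: "0 < m" unfolding m_def b0_def b1_def b2_def b3_def using b by simp
  have w: "0 \<le> (1-s)^3" "0 \<le> 3* s*(1-s)^2" "0 \<le> 3* s^2*(1-s)" "0 \<le> s^3" using s by auto
  have "m * (1-s)^3 \<le> b0 * (1-s)^3" using w unfolding m_def by (intro mult_right_mono) auto
  moreover have "m * (3* s*(1-s)^2) \<le> b1 * (3* s*(1-s)^2)" using w unfolding m_def by (intro mult_right_mono) auto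
  moreover have "m * (3* s^2*(1-s)) \<le> b2 * (3* s^2*(1-s))" using w unfolding m_def by (intro mult_right_mono) auto
  moreover have "m * s^3 \<le> b3 * s^3" using w unfolding m_def by (intro mult_right_mono) auto
  moreover have "m = m * ((1-s)^3 + 3* s*(1-s)^2 + 3* s^2*(1-s) + s^3)" by algebra
  moreover have "m * ((1-s)^3 + 3* s*(1-s)^2 + 3* s^2*(1-s) + s^3) = m * (1-s)^3 + m * (3* s*(1-s)^2) + m * (3* s^2*(1-s)) + m * s^3"
    by (simp only: distrib_left)
  ultimately have "m \<le> gg c (1 + s*L)" unfolding id by linarith
  then show ?thesis using m0 by simp
qed

lemma cubic_interval:
  fixes c h u :: real
  defines "L \<equiv> h - 1"
  defines "q0 \<equiv> c - c^3" and "q1 \<equiv> -L + 2*c*L - 3*c^3*L" and "q2 \<equiv> c*L^2 - 3*c^3*L^2" and "q3 \<equiv> -(c^3*L^3)"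
  assumes u: "1 \<le> u" "u \<le> h" and h: "1 < h"
    and b: "0 < q0" "0 < q0 + q1/3" "0 < q0 + 2*q1/3 + q2/3" "0 < q0 + q1 + q2 + q3"
  shows "0 < gg c u"
proof -
  define s where "s = (u - 1) / L"
  have L0: "0 < L" using h unfolding L_def by simp
  have s: "0 \<le> s" "s \<le> 1" using u L0 unfolding s_def L_def by (auto simp: field_simps)
  have us: "u = 1 + s * L" using L0 unfolding s_def by simp
  show ?thesis unfolding us
    by (rule cubic_bern[OF s]) (use b in \<open>simp_all add: q0_def q1_def q2_def q3_def\<close>)
qed

lemma e1: "(u::real) \<ge> 1 \<Longrightarrow> u \<le> 121/100 \<Longrightarrow> 0 < gg (206/1000) u"
  by (rule cubic_interval[where h="121/100"]) (simp_all add: power_divide)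
lemma e2: "(u::real) \<ge> 1 \<Longrightarrow> u \<le> 1452/1000 \<Longrightarrow> 0 < gg (25/100) u"
  by (rule cubic_interval[where h="1452/1000"]) (simp_all add: power_divide)
lemma e3: "(u::real) \<ge> 1 \<Longrightarrow> u \<le> 17424/10000 \<Longrightarrow> 0 < gg (3/10) u"
  by (rule cubic_interval[where h="17424/10000"]) (simp_all add: power_divide)
lemma e4: "(u::real) \<ge> 1 \<Longrightarrow> u \<le> 20812/10000 \<Longrightarrow> 0 < gg (36/100) u"
  by (rule cubic_interval[where h="20812/10000"]) (simp_all add: power_divide)
lemma e5: "(u::real) \<ge> 1 \<Longrightarrow> u \<le> 20812/10000 \<Longrightarrow> 0 < gg (43/100) u"
  by (rule cubic_interval[where h="20812/10000"]) (simp_all add: power_divide)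

lemma cube_convex:
  fixes a b r :: real
  shows "(b - r) * a^3 + (r - a) * b^3 - (b - a) * r^3 = (b - a) * (r - a) * (b - r) * (a + b + r)"
  by algebra

lemma gg_concave:
  fixes a b r u :: real
  assumes ar: "a \<le> r" and rb: "r \<le> b" and a0: "0 \<le> a" and u0: "0 \<le> u"
    and ha: "0 < gg a u" and hb: "0 < gg b u"
  shows "0 < gg r u"
proof (cases "r = b")
  case True then show ?thesis using hb by simp
next
  case False
  then have rb': "r < b" using rb by simp
  have conv: "(b - a) * r^3 \<le> (b - r) * a^3 + (r - a) * b^3"
  proof -
    have "0 \<le> (b - a) * (r - a) * (b - r) * (a + b + r)"
      using ar rb a0 by (intro mult_nonneg_nonneg) auto
    then show ?thesis using cube_convex[of b r a] by linarith
  qed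
  have key: "(b - a) * gg r u - ((b - r) * gg a u + (r - a) * gg b u) = u^3 * (((b - r) * a^3 + (r - a) * b^3) - (b - a) * r^3)"
    unfolding gg_def by algebra
  have "0 \<le> u^3 * (((b - r) * a^3 + (r - a) * b^3) - (b - a) * r^3)"
    using conv u0 by (intro mult_nonneg_nonneg) auto
  then have "(b - r) * gg a u + (r - a) * gg b u \<le> (b - a) * gg r u" using key by linarith
  moreover have "0 < (b - r) * gg a u" using rb' ha by simp
  moreover have "0 \<le> (r - a) * gg b u" using ar hb by simp
  ultimately have "0 < (b - a) * gg r u" by linarith
  moreover have "0 < b - a" using ar rb' by simp
  ultimately show ?thesis using zero_less_mult_pos by blast
qed

lemma g_pos:
  fixes r u :: real
  assumes r: "0 < r" "r \<le> 43/100" and u: "1 < u" "u \<le> 484/100 * r"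
  shows "0 < gg r u"
proof -
  have r0: "206/1000 \<le> r" using u by linarith
  have u1: "1 \<le> u" using u by simp
  show ?thesis
  proof (cases "r \<le> 25/100")
    case True
    have "u \<le> 121/100" using u True by linarith
    then show ?thesis using gg_concave[OF r0 True] e1[OF u1] e2[OF u1] u1 by auto
  next
    case c1: False
    show ?thesis
    proof (cases "r \<le> 3/10")
      case True
      have "u \<le> 1452/1000" using u True by linarith
      then show ?thesis using gg_concave[of "25/100" r "3/10"] e2[OF u1] e3[OF u1] True c1 u1 by auto
    next
      case c2: False
      show ?thesis
      proof (cases "r \<le> 36/100")
        case True
        have "u \<le> 17424/10000" using u True by linarith
        then show ?thesis using gg_concave[of "3/10" r "36/100"] e3[OF u1] e4[OF u1] True c2 u1 by auto
      next
        case c3: False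
        have "u \<le> 20812/10000" using u r by linarith
        then show ?thesis using gg_concave[of "36/100" r "43/100"] e4[OF u1] e5[OF u1] r c3 u1 by auto
      qed
    qed
  qed
qed

lemma caseB:
  assumes r: "0 < r" "r \<le> 43/100" and rz: "1 < r * z" and z: "z \<le> 484/100"
  shows "0 < F r (-z)"
proof -
  have r1: "r < 1" using r by simp
  have zp: "0 < z"
  proof (rule ccontr)
    assume "\<not> 0 < z" then have "r * z \<le> 0" using r by (simp add: mult_nonneg_nonpos)
    then show False using rz by simp
  qed
  have "r^3 * z \<le> (43/100)^3 * (484/100)"
    using r z zp by (intro mult_mono power_mono) auto
  moreover have "(43/100::real)^3 * (484/100) \<le> 1" by (simp add: power_divide)
  ultimately have a: "r^3 * z \<le> 1" by linarith
  have L: "1 - r*z + r^3*z^2 - r^6*z^3 \<le> F r (-z)" by (rule F_neg_lower[OF r(1) r1 _ a]) (use zp in simp)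
  have "1 - r*z + r^3*z^2 - r^6*z^3 = 1 - (r*z) + r * (r*z)^2 - r^3 * (r*z)^3"
    by (simp add: power_mult_distrib eval_nat_numeral)
  moreover have "0 < 1 - (r*z) + r * (r*z)^2 - r^3 * (r*z)^3"
    unfolding gg_def[symmetric]
  proof (rule g_pos[OF r rz])
    have "r * z \<le> r * (484/100)" using r z by (intro mult_left_mono) auto
    then show "r * z \<le> 484/100 * r" by simp
  qed
  ultimately show ?thesis using L by linarith
qed

lemma Ep_anti:
  assumes "0 \<le> a" "a \<le> r" "r \<le> 1"
  shows "Ep r n \<le> Ep a n"
  unfolding Ep_def
proof (rule prod_mono)
  fix k assume "k \<in> {1..n}"
  have "a^k \<le> r^k" using assms by (intro power_mono) auto
  moreover have "r^k \<le> 1" using assms by (intro power_le_one) auto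
  ultimately show "0 \<le> 1 - r^k \<and> 1 - r^k \<le> 1 - a^k" by simp
qed

lemma Ep4: "Ep a 4 = (1-a)*(1-a^2)*(1-a^3)*(1-a^4)"
  by (simp add: Ep_Suc eval_nat_numeral)

lemma tri123: "tri 1 = 1" "tri 2 = 3" "tri 3 = 6" by (simp_all add: tri_def)

lemma caseC_gen:
  fixes a b r z :: real
  assumes ab: "0 < a" "a \<le> r" "r \<le> b" "b < 1" and rz: "1 < r * z" and z: "z \<le> 484/100"
    and b4: "b^4 * (484/100) < 1"
    and N1: "b * (484/100) * Ep a 4 ^ 3 < (1 - b^2)/(484/100)"
    and N2: "b^3 * (484/100)^2 * Ep a 4 ^ 3 < (1 - b^2)/(484/100)"
    and N3: "b^6 * (484/100)^3 * Ep a 4 ^ 3 < (1 - b^2)/(484/100)"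
  shows "0 < F r (-z)"
proof -
  have r: "0 < r" "r < 1" using ab by auto
  have zp: "0 < z"
  proof (rule ccontr)
    assume "\<not> 0 < z" then have "r * z \<le> 0" using r by (simp add: mult_nonneg_nonpos)
    then show False using rz by simp
  qed
  obtain n where n: "1 \<le> n" "1 \<le> r^n * z" "r^(Suc n) * z \<le> 1" and nmin: "\<And>m. r^(Suc m) * z \<le> 1 \<Longrightarrow> n \<le> m"
    using find_n[OF r rz] by blast
  have "r^4 * z \<le> b^4 * (484/100)" using ab zp z by (intro mult_mono power_mono) auto
  then have "r^(Suc 3) * z \<le> 1" using b4 by simp
  then have n3: "n \<le> 3" by (rule nmin)
  have EL: "0 \<le> EL r" "EL r \<le> Ep a 4"
    using EL_props(3)[OF r] EL_props(2)[OF r, of 4] Ep_anti[of a r 4] ab by auto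
  have EL3: "EL r ^ 3 \<le> Ep a 4 ^ 3" using EL by (intro power_mono) auto
  have P: "r^(tri n) * z^n \<le> b^(tri n) * (484/100)^n"
    using ab zp z by (intro mult_mono power_mono) auto
  have bd: "r^(tri n) * z^n * EL r ^ 3 \<le> b^(tri n) * (484/100)^n * Ep a 4 ^ 3"
    by (rule mult_mono[OF P EL3]) (use ab zp EL in auto)
  have Nn: "b^(tri n) * (484/100)^n * Ep a 4 ^ 3 < (1 - b^2)/(484/100)"
  proof -
    have "n = 1 \<or> n = 2 \<or> n = 3" using n(1) n3 by auto
    then show ?thesis using N1 N2 N3 tri123 by auto
  qed
  have "(1 - b^2)/(484/100) \<le> (1 - r^2)/(484/100)"
    using ab by (intro divide_right_mono) (auto intro!: power_mono)
  then have B: "r^(tri n) * z^n * EL r ^ 3 < (1 - r^2)/(484/100)" using bd Nn by linarith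
  show ?thesis by (rule S_from_Th[OF r rz z n(2) n(3) B])
qed

lemma caseC:
  fixes r z :: real
  assumes r: "43/100 \<le> r" "r \<le> 66/100" and rz: "1 < r * z" and z: "z \<le> 484/100"
  shows "0 < F r (-z)"
proof -
  have c1: "?thesis" if "r \<le> 46/100"
    by (rule caseC_gen[where a="43/100" and b="46/100"]) (use r rz z that in \<open>simp_all add: Ep4 power_divide\<close>)
  have c2: "?thesis" if "46/100 \<le> r" "r \<le> 505/1000"
    by (rule caseC_gen[where a="46/100" and b="505/1000"]) (use r rz z that in \<open>simp_all add: Ep4 power_divide\<close>)
  have c3: "?thesis" if "505/1000 \<le> r" "r \<le> 59/100"
    by (rule caseC_gen[where a="505/1000" and b="59/100"]) (use r rz z that in \<open>simp_all add: Ep4 power_divide\<close>)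
  have c4: "?thesis" if "59/100 \<le> r"
    by (rule caseC_gen[where a="59/100" and b="66/100"]) (use r rz z that in \<open>simp_all add: Ep4 power_divide\<close>)
  show ?thesis using c1 c2 c3 c4 by linarith
qed

lemma EL_exp:
  assumes r: "0 < r" "r < 1"
  shows "EL r \<le> (1 - r) * exp (- (r^2 / (1 - r)))"
proof -
  have bnd: "Ep r (Suc m) \<le> (1 - r) * exp (- (r^2 * (1 - r^m) / (1 - r)))" for m
  proof -
    have e: "Ep r (1 + m) = Ep r 1 * (\<Prod>i=1..m. 1 - r^(1+i))" by (rule Ep_shift)
    have e1: "Ep r 1 = 1 - r" by (simp add: Ep_def)
    have "(\<Prod>i=1..m. 1 - r^(1+i)) \<le> (\<Prod>i=1..m. exp (- (r^(1+i))))"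
    proof (rule prod_mono)
      fix i assume "i \<in> {1..m}"
      have "r^(1+i) \<le> 1" using r by (intro power_le_one) auto
      moreover have "1 + (- (r^(1+i))) \<le> exp (- (r^(1+i)))" by (rule exp_ge_add_one_self)
      ultimately show "0 \<le> 1 - r^(1+i) \<and> 1 - r^(1+i) \<le> exp (- (r^(1+i)))" by simp
    qed
    also have "\<dots> = exp (\<Sum>i=1..m. - (r^(1+i)))" by (simp add: exp_sum)
    also have "(\<Sum>i=1..m. - (r^(1+i))) = - (r^2 * (1 - r^m) / (1 - r))"
    proof -
      have "(\<Sum>i=1..m. r^(1+i)) = (\<Sum>i<m. r^(2+i))"
        by (rule sum.reindex_bij_witness[where j="\<lambda>i. i - 1" and i="\<lambda>i. i + 1"]) auto
      also have "\<dots> = r^2 * (\<Sum>i<m. r^i)" by (simp add: sum_distrib_left power_add power2_eq_square mult.assoc)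
      also have "\<dots> = r^2 * ((1 - r^m) / (1 - r))" using r by (simp add: sum_gp_strict)
      finally show ?thesis by (simp add: sum_negf)
    qed
    finally have "(\<Prod>i=1..m. 1 - r^(1+i)) \<le> exp (- (r^2 * (1 - r^m) / (1 - r)))" .
    then have "Ep r 1 * (\<Prod>i=1..m. 1 - r^(1+i)) \<le> (1 - r) * exp (- (r^2 * (1 - r^m) / (1 - r)))"
      unfolding e1 using r by (intro mult_left_mono) auto
    then show ?thesis using e by simp
  qed
  have L1: "(\<lambda>m. Ep r (Suc m)) \<longlonglongrightarrow> EL r" using LIMSEQ_Suc[OF EL_props(1)[OF r]] .
  have L2: "(\<lambda>m. (1 - r) * exp (- (r^2 * (1 - r^m) / (1 - r)))) \<longlonglongrightarrow> (1 - r) * exp (- (r^2 * (1 - 0) / (1 - r)))"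
    using r by (intro tendsto_intros LIMSEQ_power_zero) auto
  have "EL r \<le> (1 - r) * exp (- (r^2 * (1 - 0) / (1 - r)))"
    by (rule LIMSEQ_le[OF L1 L2]) (use bnd in auto)
  then show ?thesis by simp
qed

lemma exp16: "484/100 \<le> exp (16/10::real)"
proof -
  have a: "1 + 2/10 + (2/10)^2/2 \<le> exp (2/10::real)" by (rule exp_lower_Taylor_quadratic) simp
  have "exp (16/10::real) = exp (2/10) ^ 8" using exp_of_nat_mult[of 8 "2/10::real"] by simp
  moreover have "(1 + 2/10 + (2/10)^2/2::real) ^ 8 \<le> exp (2/10) ^ 8"
    using a by (intro power_mono) (simp_all add: power_divide)
  moreover have "(484/100::real) \<le> (1 + 2/10 + (2/10)^2/2) ^ 8" by (simp add: power_divide)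
  ultimately show ?thesis by linarith
qed

lemma caseD:
  fixes r z :: real
  assumes r0: "66/100 \<le> r" and r1: "r < 1" and rz: "1 < r * z" and z: "z \<le> 484/100"
  shows "0 < F r (-z)"
proof -
  have r: "0 < r" "r < 1" using r0 r1 by auto
  have zp: "0 < z"
  proof (rule ccontr)
    assume "\<not> 0 < z" then have "r * z \<le> 0" using r by (simp add: mult_nonneg_nonpos)
    then show False using rz by simp
  qed
  obtain n where n: "1 \<le> n" "1 \<le> r^n * z" "r^(Suc n) * z \<le> 1"
    using find_n[OF r rz] by blast
  define \<beta> where "\<beta> = 1 - r"
  have b0: "0 < \<beta>" "\<beta> \<le> 34/100" using r r0 unfolding \<beta>_def by auto
  have zexp: "z^n \<le> exp (real n * (16/10))"
  proof -
    have "z^n \<le> exp (16/10) ^ n" using zp z exp16 by (intro power_mono) auto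
    moreover have "exp (real n * (16/10)) = exp (16/10) ^ n" by (rule exp_of_nat_mult)
    ultimately show ?thesis by simp
  qed
  have rexp: "r^(tri n) \<le> exp (- (\<beta> * real (tri n)))"
  proof -
    have "r \<le> exp (- \<beta>)" using exp_ge_add_one_self[of "-\<beta>"] unfolding \<beta>_def by simp
    then have "r^(tri n) \<le> exp (- \<beta>) ^ (tri n)" using r by (intro power_mono) auto
    also have "\<dots> = exp (real (tri n) * (- \<beta>))" by (rule exp_of_nat_mult[symmetric])
    finally show ?thesis by (simp add: mult.commute)
  qed
  have trin: "real n ^ 2 / 2 \<le> real (tri n)"
  proof -
    have "2 * tri n = n * (n + 1)" by (rule tri2)
    then have "2 * real (tri n) = real n * (real n + 1)" by (metis of_nat_add of_nat_mult of_nat_1 of_nat_numeral)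
    then show ?thesis by (simp add: power2_eq_square algebra_simps)
  qed
  have quad: "real n * (16/10) - \<beta> * real (tri n) \<le> (128/100) / \<beta>"
  proof -
    have "real n * (16/10) - \<beta> * real (tri n) \<le> real n * (16/10) - \<beta> * (real n ^ 2 / 2)"
      using trin b0 by (intro diff_left_mono mult_left_mono) auto
    also have "\<dots> = (128/100) / \<beta> - (\<beta> * real n - 16/10)^2 / (2 * \<beta>)"
      using b0 by (simp add: field_simps power2_eq_square)
    also have "\<dots> \<le> (128/100) / \<beta>" using b0 by simp
    finally show ?thesis .
  qed
  have P: "r^(tri n) * z^n \<le> exp ((128/100) / \<beta>)"
  proof -
    have "r^(tri n) * z^n \<le> exp (- (\<beta> * real (tri n))) * exp (real n * (16/10))"
      using rexp zexp r zp by (intro mult_mono) auto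
    also have "\<dots> = exp (real n * (16/10) - \<beta> * real (tri n))" by (simp add: exp_add[symmetric])
    also have "\<dots> \<le> exp ((128/100) / \<beta>)" using quad by simp
    finally show ?thesis .
  qed
  have EL: "0 \<le> EL r" "EL r \<le> \<beta> * exp (- (r^2 / \<beta>))"
    using EL_props(3)[OF r] EL_exp[OF r] unfolding \<beta>_def by auto
  have EL3: "EL r ^ 3 \<le> \<beta>^3 * exp (- (3 * r^2 / \<beta>))"
  proof -
    have "EL r ^ 3 \<le> (\<beta> * exp (- (r^2 / \<beta>))) ^ 3" using EL by (intro power_mono) auto
    also have "\<dots> = \<beta>^3 * exp (- (r^2 / \<beta>)) ^ 3" by (simp add: power_mult_distrib)
    also have "exp (- (r^2 / \<beta>)) ^ 3 = exp (real 3 * (- (r^2 / \<beta>)))" by (rule exp_of_nat_mult[symmetric])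
    finally show ?thesis by simp
  qed
  have "r^(tri n) * z^n * EL r ^ 3 \<le> exp ((128/100) / \<beta>) * (\<beta>^3 * exp (- (3 * r^2 / \<beta>)))"
    using P EL3 EL by (intro mult_mono) auto
  also have "\<dots> = \<beta>^3 * exp ((128/100 - 3 * r^2) / \<beta>)"
    by (simp add: exp_add[symmetric] diff_divide_distrib algebra_simps)
  also have "\<dots> \<le> \<beta>^3 * 1"
  proof -
    have "(66/100)^2 \<le> r^2" using r0 by (intro power_mono) auto
    then have "128/100 - 3 * r^2 \<le> 0" by (simp add: power_divide)
    then have "(128/100 - 3 * r^2) / \<beta> \<le> 0" using b0 by (simp add: divide_nonpos_pos)
    then show ?thesis using b0 by (intro mult_left_mono) auto
  qed
  also have "\<beta>^3 * 1 < (1 - r^2) / (484/100)"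
  proof -
    have "\<beta>^2 \<le> (34/100)^2" using b0 by (intro power_mono) auto
    then have "(484/100) * \<beta>^2 < 1 + r" using r by (simp add: power_divide)
    then have "(484/100) * \<beta>^2 * \<beta> < (1 + r) * \<beta>" using b0 by (intro mult_strict_right_mono) auto
    moreover have "(1 + r) * \<beta> = 1 - r^2" unfolding \<beta>_def by (simp add: power2_eq_square algebra_simps)
    ultimately show ?thesis by (simp add: field_simps power_numeral_reduce)
  qed
  finally have B: "r^(tri n) * z^n * EL r ^ 3 < (1 - r^2) / (484/100)" .
  show ?thesis by (rule S_from_Th[OF r rz z n(2) n(3) B])
qed

theorem S_pos:
  fixes r z :: real
  assumes r: "0 < r" "r < 1" and z: "0 \<le> z" "z \<le> 484/100"
  shows "0 < F r (-z)"
proof (cases "r * z \<le> 1")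
  case True then show ?thesis using caseA[OF r z(1)] by simp
next
  case False
  then have rz: "1 < r * z" by simp
  show ?thesis
  proof (cases "r \<le> 43/100")
    case True then show ?thesis using caseB[OF r(1) True rz z(2)] by simp
  next
    case c1: False
    show ?thesis
    proof (cases "r \<le> 66/100")
      case True then show ?thesis using caseC[OF _ True rz z(2)] c1 by simp
    next
      case False then show ?thesis using caseD[OF _ r(2) rz z(2)] by simp
    qed
  qed
qed

lemma Im_i_pow: "Im (\<i> ^ j) = (if even j then 0 else (-1) ^ ((j - 1) div 2))"
proof (cases "even j")
  case True then show ?thesis by simp
next
  case False
  then obtain k where j: "j = Suc (k * 2)" by (metis oddE mult.commute Suc_eq_plus1)
  have "\<i> ^ j = \<i> * (-1) ^ k" unfolding j by (simp add: power_Suc)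
  moreover have "Im (\<i> * (-1) ^ k) = (-1) ^ k"
    by (cases "even k") (simp_all add: power_minus_odd)
  ultimately show ?thesis using j by simp
qed

lemma tri_odd: "tri (2 * k + 1) = 4 * tri k + k + 1"
proof -
  have "2 * tri (2*k+1) = (2*k+1) * (2*k+1+1)" by (rule tri2)
  moreover have "2 * tri k = k * (k+1)" by (rule tri2)
  ultimately have "2 * tri (2*k+1) = 2 * (4 * tri k + k + 1)" by (simp add: algebra_simps)
  then show ?thesis by simp
qed

lemma Im_theta:
  fixes q y :: real
  assumes q: "0 < q" "q < 1"
  shows "Im (theta q (\<i> * complex_of_real y)) = q * y * F (q^4) (- (q * y^2))"
proof -
  define t where "t j = complex_of_real (q ^ (j * (j + 1) div 2)) * (\<i> * complex_of_real y) ^ j" for j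
  have tn: "norm (t j) = q^(tri j) * \<bar>y\<bar>^j" for j
    unfolding t_def tri_def using q by (simp add: norm_mult norm_power)
  have st: "summable t"
    by (rule summable_norm_cancel) (use summable_tri[of q "\<bar>y\<bar>"] q tn in simp)
  have Imt: "Im (t j) = (if even j then 0 else (-1) ^ ((j - 1) div 2) * q^(tri j) * y^j)" for j
  proof -
    have "t j = complex_of_real (q^(tri j) * y^j) * \<i> ^ j"
      unfolding t_def tri_def by (simp add: power_mult_distrib)
    then show ?thesis by (simp add: Im_i_pow)
  qed
  define g where "g k = (-1)^k * q^(tri (2*k+1)) * y^(2*k+1)" for k
  have gform: "g k = (q * y) * ((q^4)^(tri k) * (- (q * y^2))^k)" for k
  proof -
    have a: "(y^k)^2 = (y^2)^k" "(q^(tri k))^4 = (q^4)^(tri k)"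
      by (simp_all add: power_mult[symmetric] mult.commute)
    show ?thesis
      unfolding g_def tri_odd by (simp add: power_add power_mult power_mult_distrib power_minus' algebra_simps a)
  qed
  have sg: "summable (\<lambda>k. (q^4)^(tri k) * (- (q * y^2))^k)"
    using summable_tri[of "q^4" "- (q * y^2)"] q by (simp add: power_less_one_iff)
  have gs: "g sums ((q * y) * F (q^4) (- (q * y^2)))"
    unfolding gform F_def using sums_mult[OF summable_sums[OF sg], of "q * y"] by simp
  have "(\<lambda>j. if even j then 0 else g ((j - 1) div 2)) sums ((q * y) * F (q^4) (- (q * y^2)))"
    by (rule sums_if'[OF gs])
  moreover have "(\<lambda>j. if even j then 0 else g ((j - 1) div 2)) = (\<lambda>j. Im (t j))"
  proof
    fix j show "(if even j then 0 else g ((j - 1) div 2)) = Im (t j)"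
    proof (cases "even j")
      case False
      then have j: "2 * ((j - 1) div 2) + 1 = j" by presburger
      show ?thesis using False unfolding Imt g_def j by simp
    qed (simp add: Imt)
  qed
  ultimately have "(\<lambda>j. Im (t j)) sums ((q * y) * F (q^4) (- (q * y^2)))" by simp
  then have "(\<Sum>j. Im (t j)) = (q * y) * F (q^4) (- (q * y^2))" by (rule sums_unique[symmetric])
  moreover have "Im (suminf t) = (\<Sum>j. Im (t j))" by (rule Im_suminf[OF st])
  moreover have "theta q (\<i> * complex_of_real y) = suminf t" unfolding theta_def t_def by simp
  ultimately show ?thesis by simp
qed

lemma theta_zero: "theta q 0 = 1"
  unfolding theta_def by (subst powser_zero) simp

lemma theta_nonzero:
  fixes q y :: real
  assumes q: "0 < q" "q < 1" and y: "y^2 \<le> 484/100"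
  shows "theta q (\<i> * complex_of_real y) \<noteq> 0"
proof (cases "y = 0")
  case True then show ?thesis by (simp add: theta_zero)
next
  case False
  have r: "0 < q^4" "q^4 < 1" using q by (auto simp: power_less_one_iff)
  have z: "0 \<le> q * y^2" "q * y^2 \<le> 484/100"
  proof -
    show "0 \<le> q * y^2" using q by simp
    have "q * y^2 \<le> 1 * y^2" using q by (intro mult_right_mono) auto
    then show "q * y^2 \<le> 484/100" using y by simp
  qed
  have "0 < F (q^4) (- (q * y^2))" by (rule S_pos[OF r z])
  then have "Im (theta q (\<i> * complex_of_real y)) \<noteq> 0"
    unfolding Im_theta[OF q] using q False by simp
  then show ?thesis by auto
qed

theorem lemma6:
  fixes q :: real
  assumes "0 < q" and "q < 1"
  shows "(\<forall>y::real. \<bar>y\<bar> \<le> 2.2 \<longrightarrow> theta q (\<i> * complex_of_real y) \<noteq> 0)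
       \<and> (\<forall>y::real. \<bar>y\<bar> \<le> 3 / sqrt 2 \<longrightarrow> theta q (\<i> * complex_of_real y) \<noteq> 0)"
proof (intro conjI allI impI)
  fix y :: real assume y: "\<bar>y\<bar> \<le> 2.2"
  have "y^2 \<le> 2.2^2" using y by (metis abs_ge_zero power2_abs power_mono)
  then have "y^2 \<le> 484/100" by (simp add: power_divide)
  then show "theta q (\<i> * complex_of_real y) \<noteq> 0" by (rule theta_nonzero[OF assms])
next
  fix y :: real assume y: "\<bar>y\<bar> \<le> 3 / sqrt 2"
  have "y^2 \<le> (3 / sqrt 2)^2" using y by (metis abs_ge_zero power2_abs power_mono)
  also have "(3 / sqrt 2)^2 = 9/2" by (simp add: power_divide)
  finally have "y^2 \<le> 484/100" by simp
  then show "theta q (\<i> * complex_of_real y) \<noteq> 0" by (rule theta_nonzero[OF assms])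
qed

end
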